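(* Let $\Omega\subset\mathbb{R}^N$ be a Lipschitz open set, $s\in(1/2,1)$, $N>2s$, and let $\phi:\mathbb{R}\to\mathbb{R}$ be a Lipschitz convex function with $\phi(0)=0$. Then for every $u\in H^s_0(\Omega)$, $$(-\Delta)^s_\Omega\phi(u)\leq\phi'(u)(-\Delta)^s_\Omega u\quad\text{weakly in }\Omega.$$
   Context: $c_{N,s}$ is the standard normalization constant of the fractional Laplacian; $Q_{N,s,\Omega}(u)=\frac{c_{N,s}}{2}\int_\Omega\int_\Omega\frac{(u(x)-u(y))^2}{|x-y|^{N+2s}}dxdy$; $H^s_0(\Omega)$ is the completion of $C^\infty_c(\Omega)$ in the norm $(\|u\|_{L^2(\Omega)}^2+Q_{N,s,\Omega}(u))^{1/2}$. The regional fractional Laplacian is $(-\Delta)^s_\Omega u(x)=c_{N,s}\,\mathrm{P.V.}\int_\Omega\frac{u(x)-u(y)}{|x-y|^{N+2s}}dy$, $x\in\Omega$, understood in the weak sense through the bilinear form $\frac{c_{N,s}}{2}\int_\Omega\int_\Omega\frac{(u(x)-u(y))(\varphi(x)-\varphi(y))}{|x-y|^{N+2s}}dxdy$ tested against nonnegative test functions. Lipschitz open set: each boundary point has a neighbourhood described by a bi-Lipschitz map from a cylinder $B_r\times(-r,r)$ ($B_r$ an $(N-1)$-ball) sending the upper half into $\Omega$ and the flat part into $\partial\Omega$. *)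

theory Defs
  imports "HOL-Analysis.Analysis"
begin

fun Ck_fun :: "nat \<Rightarrow> ('a::euclidean_space \<Rightarrow> real) \<Rightarrow> bool" where
  "Ck_fun 0 f = continuous_on UNIV f"
| "Ck_fun (Suc k) f =
     ((\<forall>x. f differentiable (at x)) \<and>
      (\<forall>v. Ck_fun k (\<lambda>x. frechet_derivative f (at x) v)))"

definition smooth_fun :: "('a::euclidean_space \<Rightarrow> real) \<Rightarrow> bool" where
  "smooth_fun f \<longleftrightarrow> (\<forall>k. Ck_fun k f)"

definition test_fun :: "'a::euclidean_space set \<Rightarrow> ('a \<Rightarrow> real) \<Rightarrow> bool" where
  "test_fun \<Omega> f \<longleftrightarrow> smooth_fun f \<and> compact (closure {x. f x \<noteq> 0})
                     \<and> closure {x. f x \<noteq> 0} \<subseteq> \<Omega>"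

text \<open>The cylinder B_r x (-r,r), where the last coordinate is the direction e
  (a basis vector) and B_r is the (N-1)-ball in the hyperplane orthogonal to e.\<close>
definition cyl :: "'a::euclidean_space \<Rightarrow> real \<Rightarrow> 'a set" where
  "cyl e r = {z. norm (z - (z \<bullet> e) *\<^sub>R e) < r \<and> \<bar>z \<bullet> e\<bar> < r}"

definition bi_lipschitz_on :: "'a::metric_space set \<Rightarrow> ('a \<Rightarrow> 'b::metric_space) \<Rightarrow> bool" where
  "bi_lipschitz_on C \<Phi> \<longleftrightarrow>
     (\<exists>L>0. \<forall>x\<in>C. \<forall>y\<in>C. dist x y \<le> L * dist (\<Phi> x) (\<Phi> y)
                          \<and> dist (\<Phi> x) (\<Phi> y) \<le> L * dist x y)"

definition lipschitz_open_set :: "'a::euclidean_space set \<Rightarrow> bool" where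
  "lipschitz_open_set \<Omega> \<longleftrightarrow> open \<Omega> \<and>
     (\<forall>p\<in>frontier \<Omega>. \<exists>U (e::'a) r \<Phi>. open U \<and> p \<in> U \<and> e \<in> Basis \<and> r > 0 \<and>
        bij_betw \<Phi> (cyl e r) U \<and> bi_lipschitz_on (cyl e r) \<Phi> \<and>
        \<Phi> ` (cyl e r \<inter> {z. z \<bullet> e > 0}) = U \<inter> \<Omega> \<and>
        \<Phi> ` (cyl e r \<inter> {z. z \<bullet> e = 0}) = U \<inter> frontier \<Omega>)"

definition c_Ns :: "nat \<Rightarrow> real \<Rightarrow> real" where
  "c_Ns N s = s * 2 powr (2 * s) * Gamma ((real N + 2 * s) / 2)
              / (pi powr (real N / 2) * Gamma (1 - s))"

definition Qform :: "real \<Rightarrow> 'a::euclidean_space set \<Rightarrow> ('a \<Rightarrow> real) \<Rightarrow> ennreal" where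
  "Qform s \<Omega> u = ennreal (c_Ns DIM('a) s / 2) *
     (\<integral>\<^sup>+ z. indicator (\<Omega> \<times> \<Omega>) z *
        ennreal ((u (fst z) - u (snd z))\<^sup>2 / norm (fst z - snd z) powr (real DIM('a) + 2 * s))
      \<partial>(lebesgue \<Otimes>\<^sub>M lebesgue))"

definition L2sq :: "'a::euclidean_space set \<Rightarrow> ('a \<Rightarrow> real) \<Rightarrow> ennreal" where
  "L2sq \<Omega> u = (\<integral>\<^sup>+ x. indicator \<Omega> x * ennreal ((u x)\<^sup>2) \<partial>lebesgue)"

text \<open>H^s_0(Omega): completion of C_c^infinity(Omega) in the norm
  (||u||_{L^2}^2 + Q(u))^{1/2}; its elements are realised as (Lebesgue measurable)
  functions on Omega that are limits of test functions in this norm.\<close>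
definition Hs0 :: "real \<Rightarrow> 'a::euclidean_space set \<Rightarrow> ('a \<Rightarrow> real) set" where
  "Hs0 s \<Omega> = {u. u \<in> borel_measurable lebesgue \<and>
     (\<exists>f. (\<forall>n. test_fun \<Omega> (f n)) \<and>
          ((\<lambda>n. L2sq \<Omega> (\<lambda>x. f n x - u x) + Qform s \<Omega> (\<lambda>x. f n x - u x)) \<longlongrightarrow> 0) sequentially)}"

definition Btrunc :: "real \<Rightarrow> 'a::euclidean_space set \<Rightarrow> real \<Rightarrow> ('a \<Rightarrow> real) \<Rightarrow> ('a \<Rightarrow> real) \<Rightarrow> real" where
  "Btrunc s \<Omega> \<epsilon> v w = c_Ns DIM('a) s / 2 *
     (\<integral> z. indicator (\<Omega> \<times> \<Omega> \<inter> {z. dist (fst z) (snd z) > \<epsilon>}) z *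
        ((v (fst z) - v (snd z)) * (w (fst z) - w (snd z))
          / norm (fst z - snd z) powr (real DIM('a) + 2 * s))
      \<partial>(lebesgue \<Otimes>\<^sub>M lebesgue))"

text \<open>The bilinear form, taken in the principal value sense (liminf of the
  truncations as eps -> 0+, in the extended reals).\<close>
definition Bpv :: "real \<Rightarrow> 'a::euclidean_space set \<Rightarrow> ('a \<Rightarrow> real) \<Rightarrow> ('a \<Rightarrow> real) \<Rightarrow> ereal" where
  "Bpv s \<Omega> v w = Liminf (at_right 0) (\<lambda>\<epsilon>. ereal (Btrunc s \<Omega> \<epsilon> v w))"

end

theory Submission
  imports Defs
begin

lemma absprod_le: "\<bar>(a::real) * b\<bar> \<le> (a\<^sup>2 + b\<^sup>2) / 2"
proof -
  have "0 \<le> (\<bar>a\<bar> - \<bar>b\<bar>)\<^sup>2" by simp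
  thus ?thesis by (simp add: power2_diff abs_mult algebra_simps)
qed

lemma diff_sq_le: "((a::real) - b)\<^sup>2 \<le> 2 * a\<^sup>2 + 2 * b\<^sup>2"
proof -
  have "0 \<le> (a + b)\<^sup>2" by simp
  thus ?thesis by (simp add: power2_diff power2_sum algebra_simps)
qed

lemma abs_div_le: assumes "\<bar>P\<bar> \<le> A + B" "0 < (n::real)" shows "\<bar>P / n\<bar> \<le> 1 / n * A + 1 / n * B"
proof -
  have "\<bar>P / n\<bar> = \<bar>P\<bar> / n" using assms by simp
  also have "\<dots> \<le> (A + B) / n" using assms by (simp add: divide_right_mono)
  finally show ?thesis by (simp add: add_divide_distrib)
qed

lemma sf_leb: "sigma_finite_measure (lebesgue :: 'a::euclidean_space measure)"
proof -
  obtain A :: "'a set set" where A: "countable A" "A \<subseteq> sets lborel" "\<Union>A = space lborel" "\<forall>a\<in>A. emeasure lborel a \<noteq> \<infinity>"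
    using lborel.sigma_finite_countable by blast
  show ?thesis
    apply standard
    apply (rule exI[of _ A])
    using A by (auto simp: sets.sets_into_space)
qed

lemma shell_find:
  fixes d e :: real
  assumes "e > 0" "e < d"
  shows "\<exists>k. 2^k * e \<le> d \<and> d < 2^(Suc k) * e"
proof -
  obtain n where "d / e < 2^n" using real_arch_pow[of 2 "d/e"] by auto
  hence "d < 2^n * e" using assms by (simp add: field_simps)
  hence "\<exists>n. d < 2^n * e" by blast
  moreover have "\<not> d < 2^0 * e" using assms by simp
  ultimately obtain k where "\<not> d < 2^k * e" "d < 2^(Suc k) * e"
    using exists_least_lemma[of "\<lambda>n. d < 2^n * e"] by blast
  thus ?thesis by (intro exI[of _ k]) simp
qed

lemma kernel_bound:
  fixes x :: "'a::euclidean_space"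
  assumes e: "e > 0" and p: "p > real DIM('a)"
  shows "(\<integral>\<^sup>+y. indicator {y. e < dist x y} y * ennreal (1 / norm (x - y) powr p) \<partial>lborel)
     \<le> ennreal (unit_ball_vol (real DIM('a)) * 2 ^ DIM('a) * e powr (real DIM('a) - p) / (1 - 2 powr (real DIM('a) - p)))"
proof -
  define N where "N = real DIM('a)"
  define S where "S k = {y. 2^k * e \<le> dist x y \<and> dist x y < 2^(Suc k) * e}" for k :: nat
  define V where "V = unit_ball_vol N"
  define q where "q = 2 powr (N - p)"
  have V: "V \<ge> 0" unfolding V_def N_def by simp
  have q: "0 < q" "q < 1" unfolding q_def using p N_def by (auto intro!: powr_less_one)
  have Smeas[measurable]: "S k \<in> sets lborel" for k unfolding S_def by measurable
  have disj: "disjoint_family S"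
    unfolding disjoint_family_on_def
  proof (intro ballI impI)
    fix m n :: nat assume "m \<in> UNIV" "n \<in> UNIV" "m \<noteq> n"
    show "S m \<inter> S n = {}"
    proof (rule ccontr)
      assume "S m \<inter> S n \<noteq> {}"
      then obtain y where y: "y \<in> S m" "y \<in> S n" by blast
      have "m < n \<or> n < m" using \<open>m \<noteq> n\<close> by arith
      thus False
      proof
        assume "m < n" hence "Suc m \<le> n" by simp
        hence "(2::real)^(Suc m) \<le> 2^n" by (rule power_increasing) simp
        hence "2^(Suc m) * e \<le> 2^n * e" using e by simp
        thus False using y unfolding S_def by auto
      next
        assume "n < m" hence "Suc n \<le> m" by simp
        hence "(2::real)^(Suc n) \<le> 2^m" by (rule power_increasing) simp
        hence "2^(Suc n) * e \<le> 2^m * e" using e by simp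
        thus False using y unfolding S_def by auto
      qed
    qed
  qed
  have UN: "{y. e < dist x y} \<subseteq> (\<Union>k. S k)"
  proof safe
    fix y assume "e < dist x y"
    then obtain k where "2^k * e \<le> dist x y \<and> dist x y < 2^(Suc k) * e" using shell_find e by blast
    thus "y \<in> (\<Union>k. S k)" unfolding S_def by blast
  qed
  define g where "g y = ennreal (1 / norm (x - y) powr p)" for y
  define a where "a k = V * 2 powr N * e powr (N - p) * q ^ k" for k :: nat
  have a_nn: "0 \<le> a k" for k unfolding a_def using V q by simp
  have arith: "(2^k * e) powr (-p) * (V * (2^(Suc k) * e) ^ DIM('a)) = a k" for k :: nat
  proof -
    have "(2^(Suc k) * e) ^ DIM('a) = (2^(Suc k) * e) powr N"
      unfolding N_def using e by (simp add: powr_realpow)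
    also have "\<dots> = 2 powr N * (2 powr real k) powr N * e powr N"
      using e by (simp add: powr_mult powr_realpow[symmetric] powr_add)
    finally have A: "(2^(Suc k) * e) ^ DIM('a) = 2 powr N * (2 powr real k) powr N * e powr N" .
    have B: "(2^k * e) powr (-p) = (2 powr real k) powr (-p) * e powr (-p)"
      using e by (simp add: powr_mult powr_realpow)
    have C: "q ^ k = (2 powr real k) powr N * (2 powr real k) powr (-p)"
      unfolding q_def by (simp add: powr_powr powr_add[symmetric] powr_realpow[symmetric] algebra_simps flip: powr_power)
    show ?thesis unfolding a_def A B C
      by (simp add: powr_diff powr_minus divide_simps)
  qed
  have termb: "(\<integral>\<^sup>+y. indicator (S k) y * g y \<partial>lborel) \<le> ennreal (a k)" for k
  proof -
    have "(\<integral>\<^sup>+y. indicator (S k) y * g y \<partial>lborel)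
        \<le> (\<integral>\<^sup>+y. ennreal ((2^k * e) powr (-p)) * indicator (S k) y \<partial>lborel)"
    proof (rule nn_integral_mono)
      fix y
      show "indicator (S k) y * g y \<le> ennreal ((2^k * e) powr (-p)) * indicator (S k) y"
      proof (cases "y \<in> S k")
        case True
        hence d: "2^k * e \<le> norm (x - y)" unfolding S_def by (simp add: dist_norm)
        have pos: "0 < 2^k * e" using e by simp
        have "1 / norm (x - y) powr p = norm (x - y) powr (-p)" by (simp add: powr_minus divide_simps)
        also have "\<dots> \<le> (2^k * e) powr (-p)"
          using d pos p by (intro powr_mono2') auto
        finally show ?thesis using True unfolding g_def by (simp add: ennreal_leI)
      qed simp
    qed
    also have "\<dots> = ennreal ((2^k * e) powr (-p)) * emeasure lborel (S k)"
      by (rule nn_integral_cmult_indicator[OF Smeas])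
    also have "\<dots> \<le> ennreal ((2^k * e) powr (-p)) * emeasure lborel (cball x (2^(Suc k) * e))"
      by (intro mult_left_mono emeasure_mono) (auto simp: S_def)
    also have "\<dots> = ennreal ((2^k * e) powr (-p) * (V * (2^(Suc k) * e) ^ DIM('a)))"
      using e by (subst emeasure_cball) (auto simp: V_def N_def ennreal_mult)
    also have "\<dots> = ennreal (a k)" by (simp only: arith)
    finally show ?thesis .
  qed
  have "(\<integral>\<^sup>+y. indicator {y. e < dist x y} y * ennreal (1 / norm (x - y) powr p) \<partial>lborel)
      \<le> (\<integral>\<^sup>+y. (\<Sum>k. indicator (S k) y * g y) \<partial>lborel)"
  proof (rule nn_integral_mono)
    fix y
    have "indicator {y. e < dist x y} y \<le> (indicator (\<Union>k. S k) y :: ennreal)"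
      using UN by (auto simp: indicator_def)
    also have "\<dots> = (\<Sum>k. indicator (S k) y)" by (rule suminf_indicator[OF disj, symmetric])
    finally have "indicator {y. e < dist x y} y * g y \<le> (\<Sum>k. indicator (S k) y) * g y"
      by (rule mult_right_mono) simp
    also have "\<dots> = (\<Sum>k. indicator (S k) y * g y)" by (simp add: ennreal_suminf_multc)
    finally show "indicator {y. e < dist x y} y * ennreal (1 / norm (x - y) powr p) \<le> (\<Sum>k. indicator (S k) y * g y)"
      unfolding g_def .
  qed
  also have "\<dots> = (\<Sum>k. \<integral>\<^sup>+y. indicator (S k) y * g y \<partial>lborel)"
    by (rule nn_integral_suminf) (auto simp: g_def)
  also have "\<dots> \<le> (\<Sum>k. ennreal (a k))"
    by (intro suminf_le termb) auto
  also have "\<dots> = ennreal (\<Sum>k. a k)"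
    using q by (intro suminf_ennreal2 a_nn) (auto simp: a_def intro!: summable_mult summable_geometric)
  also have "(\<Sum>k. a k) = V * 2 powr N * e powr (N - p) / (1 - q)"
    unfolding a_def using q by (simp add: suminf_mult suminf_geometric summable_geometric divide_simps)
  finally show ?thesis unfolding V_def N_def q_def by (simp add: powr_realpow)
qed

lemma meas_fst_leb[measurable]: "fst \<in> borel_measurable (lebesgue \<Otimes>\<^sub>M (lebesgue :: 'a::euclidean_space measure))"
  by (rule measurable_compose[OF measurable_fst]) (rule measurable_completion, simp)

lemma meas_snd_leb[measurable]: "snd \<in> borel_measurable ((lebesgue :: 'a::euclidean_space measure) \<Otimes>\<^sub>M lebesgue)"
  by (rule measurable_compose[OF measurable_snd]) (rule measurable_completion, simp)

lemma kernel_bound_leb: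
  fixes x :: "'a::euclidean_space"
  assumes e: "e > 0" and p: "p > real DIM('a)"
  shows "(\<integral>\<^sup>+y. ennreal (indicator {z. e < dist (fst z) (snd z)} (x, y) / norm (x - y) powr p) \<partial>lebesgue)
     \<le> ennreal (unit_ball_vol (real DIM('a)) * 2 ^ DIM('a) * e powr (real DIM('a) - p) / (1 - 2 powr (real DIM('a) - p)))"
    and "(\<integral>\<^sup>+y. ennreal (indicator {z. e < dist (fst z) (snd z)} (y, x) / norm (y - x) powr p) \<partial>lebesgue)
     \<le> ennreal (unit_ball_vol (real DIM('a)) * 2 ^ DIM('a) * e powr (real DIM('a) - p) / (1 - 2 powr (real DIM('a) - p)))"
proof -
  have eq: "ennreal (indicator {z. e < dist (fst z) (snd z)} (x, y) / norm (x - y) powr p)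
      = indicator {y. e < dist x y} y * ennreal (1 / norm (x - y) powr p)" for y
    by (auto simp: indicator_def)
  have eq2: "ennreal (indicator {z. e < dist (fst z) (snd z)} (y, x) / norm (y - x) powr p)
      = indicator {y. e < dist x y} y * ennreal (1 / norm (x - y) powr p)" for y
    by (auto simp: indicator_def dist_commute norm_minus_commute)
  show "(\<integral>\<^sup>+y. ennreal (indicator {z. e < dist (fst z) (snd z)} (x, y) / norm (x - y) powr p) \<partial>lebesgue)
     \<le> ennreal (unit_ball_vol (real DIM('a)) * 2 ^ DIM('a) * e powr (real DIM('a) - p) / (1 - 2 powr (real DIM('a) - p)))"
    unfolding eq nn_integral_completion using kernel_bound[OF e p] .
  show "(\<integral>\<^sup>+y. ennreal (indicator {z. e < dist (fst z) (snd z)} (y, x) / norm (y - x) powr p) \<partial>lebesgue)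
     \<le> ennreal (unit_ball_vol (real DIM('a)) * 2 ^ DIM('a) * e powr (real DIM('a) - p) / (1 - 2 powr (real DIM('a) - p)))"
    unfolding eq2 nn_integral_completion using kernel_bound[OF e p] .
qed

lemma integrable_trunc:
  fixes \<Omega> :: "'a::euclidean_space set" and v w :: "'a \<Rightarrow> real"
  assumes \<Omega>: "open \<Omega>" and e: "e > 0" and p: "p > real DIM('a)"
    and v[measurable]: "v \<in> borel_measurable lebesgue" and w[measurable]: "w \<in> borel_measurable lebesgue"
    and v2: "(\<integral>\<^sup>+x. indicator \<Omega> x * ennreal ((v x)\<^sup>2) \<partial>lebesgue) < \<infinity>"
    and w2: "(\<integral>\<^sup>+x. indicator \<Omega> x * ennreal ((w x)\<^sup>2) \<partial>lebesgue) < \<infinity>"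
  shows "integrable (lebesgue \<Otimes>\<^sub>M lebesgue) (\<lambda>z. indicator (\<Omega> \<times> \<Omega> \<inter> {z. dist (fst z) (snd z) > e}) z *
        ((v (fst z) - v (snd z)) * (w (fst z) - w (snd z))
          / norm (fst z - snd z) powr p))"
proof -
  interpret P: pair_sigma_finite "lebesgue :: 'a measure" "lebesgue :: 'a measure"
    unfolding pair_sigma_finite_def using sf_leb by blast
  have \<Omega>m[measurable]: "\<Omega> \<in> sets lebesgue" using \<Omega> by simp
  define D where "D = {z::'a\<times>'a. e < dist (fst z) (snd z)}"
  have dm: "(\<lambda>z::'a\<times>'a. dist (fst z) (snd z)) \<in> borel_measurable (lebesgue \<Otimes>\<^sub>M lebesgue)" by measurable
  have Dm[measurable]: "D \<in> sets (lebesgue \<Otimes>\<^sub>M lebesgue)"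
    using dm[unfolded borel_measurable_iff_greater, rule_format, of e] unfolding D_def
    by (simp add: space_pair_measure)
  define C where "C = unit_ball_vol (real DIM('a)) * 2 ^ DIM('a) * e powr (real DIM('a) - p) / (1 - 2 powr (real DIM('a) - p))"
  define H where "H x = indicator \<Omega> x * ((v x)\<^sup>2 + (w x)\<^sup>2)" for x
  define K where "K z = indicator D z / norm (fst z - snd z) powr p" for z :: "'a \<times> 'a"
  have Hm[measurable]: "H \<in> borel_measurable lebesgue" unfolding H_def by measurable
  have Km[measurable]: "K \<in> borel_measurable (lebesgue \<Otimes>\<^sub>M lebesgue)" unfolding K_def by measurable
  have Hnn: "0 \<le> H x" for x unfolding H_def by simp
  have Knn: "0 \<le> K z" for z unfolding K_def by simp
  have Hint: "(\<integral>\<^sup>+x. ennreal (H x) \<partial>lebesgue) < \<infinity>"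
  proof -
    have "(\<integral>\<^sup>+x. ennreal (H x) \<partial>lebesgue) = (\<integral>\<^sup>+x. indicator \<Omega> x * ennreal ((v x)\<^sup>2) + indicator \<Omega> x * ennreal ((w x)\<^sup>2) \<partial>lebesgue)"
      by (intro nn_integral_cong) (auto simp: H_def indicator_def ennreal_plus)
    also have "\<dots> = (\<integral>\<^sup>+x. indicator \<Omega> x * ennreal ((v x)\<^sup>2) \<partial>lebesgue) + (\<integral>\<^sup>+x. indicator \<Omega> x * ennreal ((w x)\<^sup>2) \<partial>lebesgue)"
      by (rule nn_integral_add) auto
    also have "\<dots> < \<infinity>" using v2 w2 by simp
    finally show ?thesis .
  qed
  let ?F = "\<lambda>z. indicator (\<Omega> \<times> \<Omega> \<inter> {z. dist (fst z) (snd z) > e}) z *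
        ((v (fst z) - v (snd z)) * (w (fst z) - w (snd z))
          / norm (fst z - snd z) powr p)"
  have pw: "ennreal (norm (?F z)) \<le> ennreal (K z) * ennreal (H (fst z)) + ennreal (K z) * ennreal (H (snd z))" for z
  proof (cases "z \<in> \<Omega> \<times> \<Omega> \<inter> {z. dist (fst z) (snd z) > e}")
    case True
    obtain x y where z: "z = (x, y)" by (cases z)
    with True have xy: "x \<in> \<Omega>" "y \<in> \<Omega>" "e < dist x y" by auto
    define n where "n = norm (x - y) powr p"
    have n: "0 < n" unfolding n_def using xy e by (auto simp: dist_norm)
    have "\<bar>(v x - v y) * (w x - w y)\<bar> \<le> (v x)\<^sup>2 + (v y)\<^sup>2 + (w x)\<^sup>2 + (w y)\<^sup>2"
    proof -
      have "\<bar>(v x - v y) * (w x - w y)\<bar> \<le> ((v x - v y)\<^sup>2 + (w x - w y)\<^sup>2) / 2"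
        by (rule absprod_le)
      also have "\<dots> \<le> (v x)\<^sup>2 + (v y)\<^sup>2 + (w x)\<^sup>2 + (w y)\<^sup>2"
        using diff_sq_le[of "v x" "v y"] diff_sq_le[of "w x" "w y"] by simp
      finally show ?thesis .
    qed
    hence bnd: "\<bar>(v x - v y) * (w x - w y)\<bar> \<le> ((v x)\<^sup>2 + (w x)\<^sup>2) + ((v y)\<^sup>2 + (w y)\<^sup>2)" by simp
    have Fz: "?F z = (v x - v y) * (w x - w y) / n" using True unfolding z n_def by simp
    have Kz: "K z = 1 / n" using xy unfolding z K_def D_def n_def by simp
    have Hx: "H x = (v x)\<^sup>2 + (w x)\<^sup>2" "H y = (v y)\<^sup>2 + (w y)\<^sup>2" using xy unfolding H_def by simp_all
    have "norm (?F z) \<le> K z * H x + K z * H y" unfolding Fz Kz Hx real_norm_def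
      by (rule abs_div_le[OF bnd n])
    thus ?thesis unfolding z using Knn Hnn
      by (simp add: ennreal_mult[symmetric] ennreal_plus[symmetric] ennreal_leI del: ennreal_plus)
  qed auto
  have "(\<integral>\<^sup>+z. ennreal (norm (?F z)) \<partial>(lebesgue \<Otimes>\<^sub>M lebesgue))
     \<le> (\<integral>\<^sup>+z. ennreal (K z) * ennreal (H (fst z)) + ennreal (K z) * ennreal (H (snd z)) \<partial>(lebesgue \<Otimes>\<^sub>M lebesgue))"
    by (rule nn_integral_mono) (rule pw)
  also have "\<dots> = (\<integral>\<^sup>+z. ennreal (K z) * ennreal (H (fst z)) \<partial>(lebesgue \<Otimes>\<^sub>M lebesgue))
              + (\<integral>\<^sup>+z. ennreal (K z) * ennreal (H (snd z)) \<partial>(lebesgue \<Otimes>\<^sub>M lebesgue))"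
    by (rule nn_integral_add) auto
  also have "(\<integral>\<^sup>+z. ennreal (K z) * ennreal (H (fst z)) \<partial>(lebesgue \<Otimes>\<^sub>M lebesgue))
      = (\<integral>\<^sup>+x. \<integral>\<^sup>+y. ennreal (K (x, y)) * ennreal (H x) \<partial>lebesgue \<partial>lebesgue)"
    using sigma_finite_measure.nn_integral_fst[OF sf_leb, of "\<lambda>z. ennreal (K z) * ennreal (H (fst z))" lebesgue]
    by simp
  also have "\<dots> = (\<integral>\<^sup>+x. ennreal (H x) * \<integral>\<^sup>+y. ennreal (K (x, y)) \<partial>lebesgue \<partial>lebesgue)"
  proof (intro nn_integral_cong)
    fix x
    have "(\<lambda>y. ennreal (K (x, y))) \<in> borel_measurable lebesgue" by measurable
    thus "(\<integral>\<^sup>+y. ennreal (K (x, y)) * ennreal (H x) \<partial>lebesgue) = ennreal (H x) * (\<integral>\<^sup>+y. ennreal (K (x, y)) \<partial>lebesgue)"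
      by (simp add: nn_integral_cmult[symmetric] mult.commute)
  qed
  also have "\<dots> \<le> (\<integral>\<^sup>+x. ennreal (H x) * ennreal C \<partial>lebesgue)"
    using kernel_bound_leb(1)[OF e p] unfolding K_def D_def C_def
    by (intro nn_integral_mono mult_left_mono) auto
  also have "\<dots> = (\<integral>\<^sup>+x. ennreal (H x) \<partial>lebesgue) * ennreal C"
    by (rule nn_integral_multc) measurable
  also have "(\<integral>\<^sup>+z. ennreal (K z) * ennreal (H (snd z)) \<partial>(lebesgue \<Otimes>\<^sub>M lebesgue))
      = (\<integral>\<^sup>+y. \<integral>\<^sup>+x. ennreal (K (x, y)) * ennreal (H y) \<partial>lebesgue \<partial>lebesgue)"
    using P.nn_integral_snd[of "\<lambda>z. ennreal (K z) * ennreal (H (snd z))"]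
    by simp
  also have "\<dots> = (\<integral>\<^sup>+y. ennreal (H y) * \<integral>\<^sup>+x. ennreal (K (x, y)) \<partial>lebesgue \<partial>lebesgue)"
  proof (intro nn_integral_cong)
    fix y
    have "(\<lambda>x. ennreal (K (x, y))) \<in> borel_measurable lebesgue" by measurable
    thus "(\<integral>\<^sup>+x. ennreal (K (x, y)) * ennreal (H y) \<partial>lebesgue) = ennreal (H y) * (\<integral>\<^sup>+x. ennreal (K (x, y)) \<partial>lebesgue)"
      by (simp add: nn_integral_cmult[symmetric] mult.commute)
  qed
  also have "\<dots> \<le> (\<integral>\<^sup>+y. ennreal (H y) * ennreal C \<partial>lebesgue)"
    using kernel_bound_leb(2)[OF e p] unfolding K_def D_def C_def
    by (intro nn_integral_mono mult_left_mono) auto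
  also have "\<dots> = (\<integral>\<^sup>+x. ennreal (H x) \<partial>lebesgue) * ennreal C"
    by (rule nn_integral_multc) measurable
  also have "(\<integral>\<^sup>+x. ennreal (H x) \<partial>lebesgue) * ennreal C + (\<integral>\<^sup>+x. ennreal (H x) \<partial>lebesgue) * ennreal C < \<infinity>"
    using Hint by (simp add: ennreal_mult_less_top)
  finally have fin: "(\<integral>\<^sup>+z. ennreal (norm (?F z)) \<partial>(lebesgue \<Otimes>\<^sub>M lebesgue)) < \<infinity>" 
    by (simp add: add_mono)
  show ?thesis
    by (rule integrableI_bounded[OF _ fin]) measurable
qed

lemma test_fun_props:
  fixes f :: "'a::euclidean_space \<Rightarrow> real"
  assumes "test_fun \<Omega> f"
  shows "f \<in> borel_measurable lebesgue" "\<exists>M. \<forall>x. \<bar>f x\<bar> \<le> M"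
    "(\<integral>\<^sup>+x. indicator \<Omega> x * ennreal ((f x)\<^sup>2) \<partial>lebesgue) < \<infinity>"
proof -
  define S where "S = closure {x. f x \<noteq> 0}"
  have "Ck_fun 0 f" using assms unfolding test_fun_def smooth_fun_def by blast
  hence cont: "continuous_on UNIV f" by simp
  have S: "compact S" using assms unfolding test_fun_def S_def by blast
  have "f \<in> borel_measurable lborel" unfolding measurable_lborel2
    by (rule borel_measurable_continuous_onI[OF cont])
  thus fm: "f \<in> borel_measurable lebesgue" by (rule measurable_completion)
  have sub: "{x. f x \<noteq> 0} \<subseteq> S" unfolding S_def by (rule closure_subset)
  have out: "f x = 0" if "x \<notin> S" for x
    using sub that by blast
  have contS: "continuous_on S f" using cont by (rule continuous_on_subset) simp
  have "bounded (f ` S)" by (rule compact_imp_bounded[OF compact_continuous_image[OF contS S]])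
  then obtain M0 where M0: "\<forall>y\<in>f ` S. norm y \<le> M0" unfolding bounded_iff by blast
  define M where "M = max M0 0"
  have bnd: "\<bar>f x\<bar> \<le> M" for x
  proof (cases "x \<in> S")
    case True
    hence "norm (f x) \<le> M0" using M0 by blast
    thus ?thesis unfolding M_def by simp
  next
    case False thus ?thesis using out[OF False] unfolding M_def by simp
  qed
  thus "\<exists>M. \<forall>x. \<bar>f x\<bar> \<le> M" by blast
  have "(\<integral>\<^sup>+x. indicator \<Omega> x * ennreal ((f x)\<^sup>2) \<partial>lebesgue) \<le> (\<integral>\<^sup>+x. ennreal (M\<^sup>2) * indicator S x \<partial>lebesgue)"
  proof (rule nn_integral_mono)
    fix x
    show "indicator \<Omega> x * ennreal ((f x)\<^sup>2) \<le> ennreal (M\<^sup>2) * indicator S x"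
    proof (cases "x \<in> S")
      case True
      have "(f x)\<^sup>2 \<le> M\<^sup>2" using power_mono[OF bnd[of x] abs_ge_zero, of 2] by simp
      thus ?thesis using True by (auto simp: indicator_def ennreal_leI)
    qed (simp add: out)
  qed
  also have "\<dots> = ennreal (M\<^sup>2) * emeasure lebesgue S"
    using S by (intro nn_integral_cmult_indicator) (simp add: compact_imp_closed)
  also have "\<dots> < \<infinity>"
    using S emeasure_compact_finite[OF S] by (simp add: compact_imp_closed ennreal_mult_less_top)
  finally show "(\<integral>\<^sup>+x. indicator \<Omega> x * ennreal ((f x)\<^sup>2) \<partial>lebesgue) < \<infinity>" .
qed

lemma L2_dom:
  fixes g h :: "'a::euclidean_space \<Rightarrow> real"
  assumes "\<And>x. (g x)\<^sup>2 \<le> c * (h x)\<^sup>2" "0 \<le> c" "h \<in> borel_measurable lebesgue" "\<Omega> \<in> sets lebesgue"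
    "(\<integral>\<^sup>+x. indicator \<Omega> x * ennreal ((h x)\<^sup>2) \<partial>lebesgue) < \<infinity>"
  shows "(\<integral>\<^sup>+x. indicator \<Omega> x * ennreal ((g x)\<^sup>2) \<partial>lebesgue) < \<infinity>"
proof -
  have [measurable]: "h \<in> borel_measurable lebesgue" "\<Omega> \<in> sets lebesgue" using assms by auto
  have "(\<integral>\<^sup>+x. indicator \<Omega> x * ennreal ((g x)\<^sup>2) \<partial>lebesgue) \<le> (\<integral>\<^sup>+x. ennreal c * (indicator \<Omega> x * ennreal ((h x)\<^sup>2)) \<partial>lebesgue)"
    using assms(1,2) by (intro nn_integral_mono) (auto simp: indicator_def ennreal_mult[symmetric] ennreal_leI)
  also have "\<dots> = ennreal c * (\<integral>\<^sup>+x. indicator \<Omega> x * ennreal ((h x)\<^sup>2) \<partial>lebesgue)"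
    by (rule nn_integral_cmult) measurable
  also have "\<dots> < \<infinity>" using assms(5) by (simp add: ennreal_mult_less_top)
  finally show ?thesis .
qed

lemma Hs0_L2:
  fixes u :: "'a::euclidean_space \<Rightarrow> real"
  assumes "u \<in> Hs0 s \<Omega>" "\<Omega> \<in> sets lebesgue"
  shows "u \<in> borel_measurable lebesgue" "(\<integral>\<^sup>+x. indicator \<Omega> x * ennreal ((u x)\<^sup>2) \<partial>lebesgue) < \<infinity>"
proof -
  obtain f where f: "\<And>n. test_fun \<Omega> (f n)"
    and lim: "((\<lambda>n. L2sq \<Omega> (\<lambda>x. f n x - u x) + Qform s \<Omega> (\<lambda>x. f n x - u x)) \<longlongrightarrow> 0) sequentially"
    and um: "u \<in> borel_measurable lebesgue"
    using assms(1) unfolding Hs0_def by blast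
  show "u \<in> borel_measurable lebesgue" by (rule um)
  have [measurable]: "u \<in> borel_measurable lebesgue" "\<Omega> \<in> sets lebesgue" using um assms(2) by auto
  have "eventually (\<lambda>n. L2sq \<Omega> (\<lambda>x. f n x - u x) + Qform s \<Omega> (\<lambda>x. f n x - u x) < 1) sequentially"
    using order_tendstoD(2)[OF lim] by simp
  then obtain n where n: "L2sq \<Omega> (\<lambda>x. f n x - u x) + Qform s \<Omega> (\<lambda>x. f n x - u x) < 1"
    by (auto dest: eventually_happens)
  have d: "(\<integral>\<^sup>+x. indicator \<Omega> x * ennreal ((f n x - u x)\<^sup>2) \<partial>lebesgue) < \<infinity>"
  proof -
    have "L2sq \<Omega> (\<lambda>x. f n x - u x) \<le> L2sq \<Omega> (\<lambda>x. f n x - u x) + Qform s \<Omega> (\<lambda>x. f n x - u x)" by simp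
    also note n
    finally have "L2sq \<Omega> (\<lambda>x. f n x - u x) < 1" .
    hence "L2sq \<Omega> (\<lambda>x. f n x - u x) < top" using ennreal_one_less_top by (rule order.strict_trans)
    thus ?thesis unfolding L2sq_def by simp
  qed
  have [measurable]: "f n \<in> borel_measurable lebesgue" using test_fun_props(1)[OF f] .
  have fn: "(\<integral>\<^sup>+x. indicator \<Omega> x * ennreal ((f n x)\<^sup>2) \<partial>lebesgue) < \<infinity>" using test_fun_props(3)[OF f] .
  have "(\<integral>\<^sup>+x. indicator \<Omega> x * ennreal ((u x)\<^sup>2) \<partial>lebesgue)
     \<le> (\<integral>\<^sup>+x. 2 * (indicator \<Omega> x * ennreal ((f n x)\<^sup>2)) + 2 * (indicator \<Omega> x * ennreal ((f n x - u x)\<^sup>2)) \<partial>lebesgue)"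
  proof (rule nn_integral_mono)
    fix x
    have r: "(u x)\<^sup>2 \<le> 2 * (f n x)\<^sup>2 + 2 * (f n x - u x)\<^sup>2"
      using diff_sq_le[of "f n x" "f n x - u x"] by simp
    have "ennreal ((u x)\<^sup>2) \<le> ennreal (2 * (f n x)\<^sup>2 + 2 * (f n x - u x)\<^sup>2)" using r by (rule ennreal_leI)
    also have "\<dots> = 2 * ennreal ((f n x)\<^sup>2) + 2 * ennreal ((f n x - u x)\<^sup>2)"
      by (subst ennreal_plus) (simp_all add: ennreal_mult')
    finally show "indicator \<Omega> x * ennreal ((u x)\<^sup>2) \<le> 2 * (indicator \<Omega> x * ennreal ((f n x)\<^sup>2)) + 2 * (indicator \<Omega> x * ennreal ((f n x - u x)\<^sup>2))"
      by (auto simp: indicator_def)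
  qed
  also have "\<dots> = 2 * (\<integral>\<^sup>+x. indicator \<Omega> x * ennreal ((f n x)\<^sup>2) \<partial>lebesgue) + 2 * (\<integral>\<^sup>+x. indicator \<Omega> x * ennreal ((f n x - u x)\<^sup>2) \<partial>lebesgue)"
    by (simp add: nn_integral_add nn_integral_cmult)
  also have "\<dots> < \<infinity>" using fn d by (simp add: ennreal_mult_less_top)
  finally show "(\<integral>\<^sup>+x. indicator \<Omega> x * ennreal ((u x)\<^sup>2) \<partial>lebesgue) < \<infinity>" .
qed

lemma key_ineq:
  fixes a b fa fb da db px py :: real
  assumes "fa + da * (b - a) \<le> fb" "fb + db * (a - b) \<le> fa" "0 \<le> px" "0 \<le> py"
  shows "(fa - fb) * (px - py) \<le> (a - b) * (da * px - db * py)"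
proof -
  have 1: "0 \<le> px * (fb - fa - da * (b - a))" using assms by simp
  have 2: "0 \<le> py * (fa - fb - db * (a - b))" using assms by simp
  have eq: "(a - b) * (da * px - db * py) - (fa - fb) * (px - py)
      = px * (fb - fa - da * (b - a)) + py * (fa - fb - db * (a - b))" by (simp add: algebra_simps)
  show ?thesis using 1 2 eq by linarith
qed


lemma c_Ns_nonneg: assumes "0 < s" "s < 1" shows "0 \<le> c_Ns N s"
  unfolding c_Ns_def using assms
  by (intro divide_nonneg_nonneg mult_nonneg_nonneg less_imp_le[OF Gamma_real_pos]) auto

theorem proposition2p2:
  fixes \<Omega> :: "'a::euclidean_space set"
    and s :: real and \<phi> :: "real \<Rightarrow> real" and \<phi>' :: "real \<Rightarrow> real"
    and u :: "'a \<Rightarrow> real"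
  assumes "lipschitz_open_set \<Omega>"
    and "1/2 < s" and "s < 1" and "2 * s < real DIM('a)"
    and "\<exists>L. L-lipschitz_on UNIV \<phi>"
    and "convex_on UNIV \<phi>"
    and "\<phi> 0 = 0"
    and "\<forall>t y. \<phi> t + \<phi>' t * (y - t) \<le> \<phi> y"
    and "u \<in> Hs0 s \<Omega>"
  shows "\<forall>\<psi>. test_fun \<Omega> \<psi> \<and> (\<forall>x. 0 \<le> \<psi> x) \<longrightarrow>
           Bpv s \<Omega> (\<lambda>x. \<phi> (u x)) \<psi> \<le> Bpv s \<Omega> u (\<lambda>x. \<phi>' (u x) * \<psi> x)"
proof (intro allI impI)
  fix \<psi> :: "'a \<Rightarrow> real"
  assume "test_fun \<Omega> \<psi> \<and> (\<forall>x. 0 \<le> \<psi> x)"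
  hence tf: "test_fun \<Omega> \<psi>" and pnn: "\<And>x. 0 \<le> \<psi> x" by auto
  have op: "open \<Omega>" using assms(1) unfolding lipschitz_open_set_def by blast
  have \<Omega>m[measurable]: "\<Omega> \<in> sets lebesgue" using op by simp
  obtain L where L: "L-lipschitz_on UNIV \<phi>" using assms(5) by blast
  have L0: "0 \<le> L" using L by (rule lipschitz_on_nonneg)
  have lip: "\<bar>\<phi> a - \<phi> b\<bar> \<le> L * \<bar>a - b\<bar>" for a b
    using lipschitz_onD[OF L, of a b] by (simp add: dist_real_def)
  have sub: "\<phi> t + \<phi>' t * (y - t) \<le> \<phi> y" for t y using assms(8) by blast
  have phi_bnd: "\<bar>\<phi> t\<bar> \<le> L * \<bar>t\<bar>" for t using lip[of t 0] assms(7) by simp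
  have dphi_bnd: "\<bar>\<phi>' t\<bar> \<le> L" for t
  proof -
    have "\<phi>' t \<le> \<phi> (t + 1) - \<phi> t" using sub[of t "t + 1"] by simp
    also have "\<dots> \<le> L" using lip[of "t + 1" t] by simp
    finally have 1: "\<phi>' t \<le> L" .
    have "- \<phi>' t \<le> \<phi> (t - 1) - \<phi> t" using sub[of t "t - 1"] by simp
    also have "\<dots> \<le> L" using lip[of "t - 1" t] by simp
    finally have 2: "- \<phi>' t \<le> L" .
    show ?thesis using 1 2 by linarith
  qed
  have mono: "mono \<phi>'"
  proof (rule monoI)
    fix t y :: real assume ty: "t \<le> y"
    show "\<phi>' t \<le> \<phi>' y"
    proof (cases "t = y")
      case False
      with ty have "0 < y - t" by simp
      have "(\<phi>' t - \<phi>' y) * (y - t) \<le> 0"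
        using sub[of t y] sub[of y t] by (simp add: algebra_simps)
      thus ?thesis using \<open>0 < y - t\<close> by (simp add: mult_le_0_iff)
    qed simp
  qed
  have cphi: "continuous_on UNIV \<phi>" using L by (rule lipschitz_on_continuous_on)
  obtain um: "u \<in> borel_measurable lebesgue" and uL2: "(\<integral>\<^sup>+x. indicator \<Omega> x * ennreal ((u x)\<^sup>2) \<partial>lebesgue) < \<infinity>"
    using Hs0_L2[OF assms(9) \<Omega>m] by blast
  have [measurable]: "u \<in> borel_measurable lebesgue" by (rule um)
  have psim[measurable]: "\<psi> \<in> borel_measurable lebesgue" and psiL2: "(\<integral>\<^sup>+x. indicator \<Omega> x * ennreal ((\<psi> x)\<^sup>2) \<partial>lebesgue) < \<infinity>"
    using test_fun_props[OF tf] by auto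
  have phim: "(\<lambda>x. \<phi> (u x)) \<in> borel_measurable lebesgue"
    using measurable_compose[OF um borel_measurable_continuous_onI[OF cphi]] by (simp add: comp_def)
  have dphim: "(\<lambda>x. \<phi>' (u x)) \<in> borel_measurable lebesgue"
    using measurable_compose[OF um borel_measurable_mono[OF mono]] by (simp add: comp_def)
  have wm: "(\<lambda>x. \<phi>' (u x) * \<psi> x) \<in> borel_measurable lebesgue"
    using dphim psim by (rule borel_measurable_times)
  have phiL2: "(\<integral>\<^sup>+x. indicator \<Omega> x * ennreal ((\<phi> (u x))\<^sup>2) \<partial>lebesgue) < \<infinity>"
  proof (rule L2_dom[OF _ _ um \<Omega>m uL2])
    fix x
    have "\<bar>\<phi> (u x)\<bar> \<le> L * \<bar>u x\<bar>" by (rule phi_bnd)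
    hence "\<bar>\<phi> (u x)\<bar>\<^sup>2 \<le> (L * \<bar>u x\<bar>)\<^sup>2" by (rule power_mono) simp
    thus "(\<phi> (u x))\<^sup>2 \<le> L\<^sup>2 * (u x)\<^sup>2" by (simp add: power_mult_distrib)
  qed simp
  have wL2: "(\<integral>\<^sup>+x. indicator \<Omega> x * ennreal ((\<phi>' (u x) * \<psi> x)\<^sup>2) \<partial>lebesgue) < \<infinity>"
  proof (rule L2_dom[OF _ _ psim \<Omega>m psiL2])
    fix x
    have "\<bar>\<phi>' (u x)\<bar>\<^sup>2 \<le> L\<^sup>2" by (rule power_mono[OF dphi_bnd]) simp
    hence "(\<phi>' (u x))\<^sup>2 * (\<psi> x)\<^sup>2 \<le> L\<^sup>2 * (\<psi> x)\<^sup>2" by (intro mult_right_mono) simp_all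
    thus "(\<phi>' (u x) * \<psi> x)\<^sup>2 \<le> L\<^sup>2 * (\<psi> x)\<^sup>2" by (simp add: power_mult_distrib)
  qed simp
  define p where "p = real DIM('a) + 2 * s"
  have p: "real DIM('a) < p" unfolding p_def using assms(2) by simp
  have c0: "0 \<le> c_Ns DIM('a) s / 2" using c_Ns_nonneg[of s] assms(2,3) by simp
  have trunc: "Btrunc s \<Omega> e (\<lambda>x. \<phi> (u x)) \<psi> \<le> Btrunc s \<Omega> e u (\<lambda>x. \<phi>' (u x) * \<psi> x)" if e: "0 < e" for e
  proof -
    have i1: "integrable (lebesgue \<Otimes>\<^sub>M lebesgue) (\<lambda>z. indicator (\<Omega> \<times> \<Omega> \<inter> {z. dist (fst z) (snd z) > e}) z *
        ((\<phi> (u (fst z)) - \<phi> (u (snd z))) * (\<psi> (fst z) - \<psi> (snd z)) / norm (fst z - snd z) powr p))"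
      by (rule integrable_trunc[OF op e p phim psim phiL2 psiL2])
    have i2: "integrable (lebesgue \<Otimes>\<^sub>M lebesgue) (\<lambda>z. indicator (\<Omega> \<times> \<Omega> \<inter> {z. dist (fst z) (snd z) > e}) z *
        ((u (fst z) - u (snd z)) * (\<phi>' (u (fst z)) * \<psi> (fst z) - \<phi>' (u (snd z)) * \<psi> (snd z)) / norm (fst z - snd z) powr p))"
      by (rule integrable_trunc[OF op e p um wm uL2 wL2])
    have "(\<integral> z. indicator (\<Omega> \<times> \<Omega> \<inter> {z. dist (fst z) (snd z) > e}) z *
        ((\<phi> (u (fst z)) - \<phi> (u (snd z))) * (\<psi> (fst z) - \<psi> (snd z)) / norm (fst z - snd z) powr p) \<partial>(lebesgue \<Otimes>\<^sub>M lebesgue))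
      \<le> (\<integral> z. indicator (\<Omega> \<times> \<Omega> \<inter> {z. dist (fst z) (snd z) > e}) z *
        ((u (fst z) - u (snd z)) * (\<phi>' (u (fst z)) * \<psi> (fst z) - \<phi>' (u (snd z)) * \<psi> (snd z)) / norm (fst z - snd z) powr p) \<partial>(lebesgue \<Otimes>\<^sub>M lebesgue))"
    proof (rule integral_mono[OF i1 i2])
      fix z :: "'a \<times> 'a"
      have k: "(\<phi> (u (fst z)) - \<phi> (u (snd z))) * (\<psi> (fst z) - \<psi> (snd z))
          \<le> (u (fst z) - u (snd z)) * (\<phi>' (u (fst z)) * \<psi> (fst z) - \<phi>' (u (snd z)) * \<psi> (snd z))"
        by (rule key_ineq[OF sub sub pnn pnn])
      have "(\<phi> (u (fst z)) - \<phi> (u (snd z))) * (\<psi> (fst z) - \<psi> (snd z)) / norm (fst z - snd z) powr p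
          \<le> (u (fst z) - u (snd z)) * (\<phi>' (u (fst z)) * \<psi> (fst z) - \<phi>' (u (snd z)) * \<psi> (snd z)) / norm (fst z - snd z) powr p"
        by (rule divide_right_mono[OF k]) simp
      thus "indicator (\<Omega> \<times> \<Omega> \<inter> {z. dist (fst z) (snd z) > e}) z *
        ((\<phi> (u (fst z)) - \<phi> (u (snd z))) * (\<psi> (fst z) - \<psi> (snd z)) / norm (fst z - snd z) powr p)
        \<le> indicator (\<Omega> \<times> \<Omega> \<inter> {z. dist (fst z) (snd z) > e}) z *
        ((u (fst z) - u (snd z)) * (\<phi>' (u (fst z)) * \<psi> (fst z) - \<phi>' (u (snd z)) * \<psi> (snd z)) / norm (fst z - snd z) powr p)"
        by (rule mult_left_mono) simp
    qed
    thus ?thesis unfolding Btrunc_def p_def[symmetric] by (rule mult_left_mono[OF _ c0])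
  qed
  show "Bpv s \<Omega> (\<lambda>x. \<phi> (u x)) \<psi> \<le> Bpv s \<Omega> u (\<lambda>x. \<phi>' (u x) * \<psi> x)"
    unfolding Bpv_def
  proof (rule Liminf_mono)
    show "\<forall>\<^sub>F e in at_right 0. ereal (Btrunc s \<Omega> e (\<lambda>x. \<phi> (u x)) \<psi>) \<le> ereal (Btrunc s \<Omega> e u (\<lambda>x. \<phi>' (u x) * \<psi> x))"
      using eventually_at_right_less[of 0] by eventually_elim (simp add: trunc)
  qed
qed

end
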